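(* Let $N_R\ge1$ and $N_s\ge2$ be integers and $\gamma>0$. Let $\Omega$ be an angular interval, $p$ a probability density on $\Omega$, and $\eta:\Omega\to(0,\infty)$ a measurable function (not depending on $L$). For each positive integer $L$ and $\phi\in\Omega$ let $p_{miss}(\phi)=\Pr\{X_{L,\phi}\le(N_s-1)\gamma\}$ where $X_{L,\phi}\sim\mathcal{F}(2N_RL,\,2N_RL(N_s-1),\,L\eta(\phi))$, and let $\bar p_{miss}=\int_\Omega p_{miss}(\phi)p(\phi)\,d\phi$. If there exist $\Omega^-\subset\Omega$ and $\eta^->0$ such that $\eta(\phi)\le\eta^-$ for all $\phi\in\Omega^-$ and $\int_{\Omega^-}p(\phi)\,d\phi>0$, then $$\lim_{L\to\infty}-\frac1L\log\bar p_{miss}\le I^*(\eta^-,\gamma)\qquad\text{if }\gamma<\frac{2N_R+\eta^-}{2N_R(N_s-1)},$$ where for $\eta>0$, $$I^*(\eta,\gamma)=\frac{\eta}{2}\left(1-\frac{\gamma v^*}{N_R+\sqrt{N_R^2+\gamma\eta v^*}}\right)+N_R(N_s-1)\log\frac{2N_R(N_s-1)}{v^*}-N_R\log\frac{\gamma v^*}{N_R+\sqrt{N_R^2+\gamma\eta v^*}},$$ with $v^*=\frac{x^{*2}-N_R^2}{\eta\gamma}$ and $x^*>0$ a solution of $\frac{\gamma+1}{\eta\gamma}(x^2-N_R^2)-x-N_R-2N_R(N_s-1)=0$.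
   Context: $\mathcal{F}(n_1,n_2,\lambda)$ denotes the noncentral F-distribution with degrees of freedom $n_1,n_2$ and noncentrality $\lambda$, i.e. the law of $(X_1/n_1)/(X_2/n_2)$ with $X_1$ noncentral chi-square ($n_1$ degrees of freedom, noncentrality $\lambda$) and $X_2$ an independent central chi-square with $n_2$ degrees of freedom. In the application, $\eta(\phi)$ is the normalised noncentrality parameter (proportional to the average transmit beamforming gain in direction $\phi$ divided by the path loss) of a user in direction $\phi$, $p_{miss}(\phi)$ is its miss-detection probability for the GLRT statistic with threshold $\gamma$, and $\bar p_{miss}$ is the average miss-detection probability over user directions. *)

theory Defs
  imports "HOL-Probability.Probability"
begin

definition chi2_density :: "nat \<Rightarrow> real \<Rightarrow> real" where
  "chi2_density k x =
     (if x > 0 then x powr (real k / 2 - 1) * exp (- x / 2) /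
                    (2 powr (real k / 2) * Gamma (real k / 2))
      else 0)"

text \<open>Density of the noncentral chi-square distribution with k degrees of freedom and
  noncentrality lam (lam = sum of squared means), as the standard Poisson(lam/2) mixture
  of central chi-square densities.\<close>
definition ncchi2_density :: "nat \<Rightarrow> real \<Rightarrow> real \<Rightarrow> real" where
  "ncchi2_density k lam x =
     (\<Sum>j. exp (- lam / 2) * (lam / 2) ^ j / fact j * chi2_density (k + 2 * j) x)"

definition ncF :: "nat \<Rightarrow> nat \<Rightarrow> real \<Rightarrow> real measure" where
  "ncF n1 n2 lam =
     distr (density (lborel \<Otimes>\<^sub>M lborel)
              (\<lambda>(x1, x2). ennreal (ncchi2_density n1 lam x1 * chi2_density n2 x2)))
           lborel (\<lambda>(x1, x2). (x1 / real n1) / (x2 / real n2))"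

definition p_miss :: "nat \<Rightarrow> nat \<Rightarrow> real \<Rightarrow> nat \<Rightarrow> real \<Rightarrow> real" where
  "p_miss NR Ns \<gamma> L eta =
     measure (ncF (2 * NR * L) (2 * NR * L * (Ns - 1)) (real L * eta)) {.. real (Ns - 1) * \<gamma>}"

definition p_miss_avg ::
  "nat \<Rightarrow> nat \<Rightarrow> real \<Rightarrow> nat \<Rightarrow> real set \<Rightarrow> (real \<Rightarrow> real) \<Rightarrow> (real \<Rightarrow> real) \<Rightarrow> real" where
  "p_miss_avg NR Ns \<gamma> L \<Omega> p \<eta> =
     enn2real (\<integral>\<^sup>+ \<phi>. ennreal (p_miss NR Ns \<gamma> L (\<eta> \<phi>) * p \<phi>) * indicator \<Omega> \<phi> \<partial>lborel)"

text \<open>The rate function I*(eta, gamma), given the solution x* of the quadratic.\<close>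
definition I_star :: "nat \<Rightarrow> nat \<Rightarrow> real \<Rightarrow> real \<Rightarrow> real \<Rightarrow> real" where
  "I_star NR Ns \<eta> \<gamma> xs =
     (let v = (xs^2 - real NR ^ 2) / (\<eta> * \<gamma>);
          q = \<gamma> * v / (real NR + sqrt (real NR ^ 2 + \<gamma> * \<eta> * v))
      in \<eta> / 2 * (1 - q)
         + real NR * real (Ns - 1) * ln (2 * real NR * real (Ns - 1) / v)
         - real NR * ln q)"

end

theory Submission
  imports Defs
begin


lemma chi2_even:
  assumes "1 \<le> n"
  shows "chi2_density (2*n) x = (if x > 0 then x^(n-1) * exp (-x/2) / (2^n * fact (n-1)) else 0)"
proof -
  have e: "real (2*n) / 2 - 1 = real (n-1)" using assms by (simp add: of_nat_diff)
  have g0: "real (2*n)/2 = 1 + of_nat (n-1)" using assms by (simp add: of_nat_diff)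
  have g: "Gamma (real (2*n) / 2) = fact (n-1)"
    unfolding g0 by (rule Gamma_fact)
  have p: "(2::real) powr (real (2*n) / 2) = 2^n" by (simp add: powr_realpow)
  have q: "x > 0 \<Longrightarrow> x powr real (n-1) = x^(n-1)" by (simp add: powr_realpow)
  show ?thesis unfolding chi2_density_def e g p using q by simp
qed

lemma chi2_even_nonneg: "1 \<le> n \<Longrightarrow> chi2_density (2*n) x \<ge> 0"
  by (simp add: chi2_even)

lemma term_le_suminf: "summable f \<Longrightarrow> (\<And>n. 0 \<le> f n) \<Longrightarrow> (f i::real) \<le> suminf f"
  using sum_le_suminf[of f "{i}"] by auto

lemma pow_fact_le_exp:
  fixes x :: real assumes "0 \<le> x" shows "x^n / fact n \<le> exp x"
proof -
  have s: "summable (\<lambda>n. x^n / fact n)" using summable_exp[of x] by (simp add: divide_inverse mult.commute)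
  have "exp x = (\<Sum>n. x^n / fact n)" unfolding exp_def by (simp add: divide_inverse mult.commute)
  moreover have "x^n / fact n \<le> (\<Sum>n. x^n / fact n)"
    using s by (rule term_le_suminf) (use assms in auto)
  ultimately show ?thesis by simp
qed

lemma chi2_even_le_half:
  assumes "1 \<le> n" shows "chi2_density (2*n) x \<le> 1/2"
proof (cases "x > 0")
  case True
  obtain n' where n': "n = Suc n'" using assms by (cases n) auto
  have "chi2_density (2*n) x = x^(n-1) * exp (-x/2) / (2^n * fact (n-1))"
    using True by (simp add: chi2_even[OF assms])
  also have "\<dots> = (1/2) * ((x/2)^n' / fact n') * exp (-x/2)"
    by (simp add: n' power_divide)
  also have "\<dots> \<le> (1/2) * exp (x/2) * exp (-x/2)"
    using True by (intro mult_right_mono mult_left_mono pow_fact_le_exp) auto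
  also have "\<dots> = 1/2" by (simp flip: exp_add)
  finally show ?thesis .
qed (use assms in \<open>simp add: chi2_even\<close>)

definition nc_term :: "nat \<Rightarrow> real \<Rightarrow> real \<Rightarrow> nat \<Rightarrow> real" where
  "nc_term k lam x j = exp (- lam / 2) * (lam / 2) ^ j / fact j * chi2_density (k + 2 * j) x"

lemma exp_series_summable: "summable (\<lambda>n. (x::real)^n / fact n)"
  using summable_exp[of x] by (simp add: divide_inverse mult.commute)

lemma exp_series_sum: "(\<Sum>n. (x::real)^n / fact n) = exp x"
  unfolding exp_def by (simp add: divide_inverse mult.commute)

lemma pois_summable: "summable (\<lambda>j. exp (- lam / 2) * (lam / 2) ^ j / fact j :: real)"
  using summable_mult[OF exp_series_summable[of "lam/2"], of "exp (-lam/2)"] by simp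

lemma pois_sum: "(\<Sum>j. exp (- lam / 2) * (lam / 2) ^ j / fact j :: real) = 1"
proof -
  have "(\<Sum>j. exp (- lam / 2) * ((lam / 2) ^ j / fact j)) = exp (-lam/2) * (\<Sum>j. (lam/2)^j / fact j)"
    by (rule suminf_mult[OF exp_series_summable])
  then have "(\<Sum>j. exp (- lam / 2) * (lam / 2) ^ j / fact j) = exp (-lam/2) * exp (lam/2)"
    by (simp add: exp_series_sum)
  then show ?thesis by (simp flip: exp_add)
qed

lemma nc_term_nonneg: "k = 2*m \<Longrightarrow> 1 \<le> m \<Longrightarrow> 0 \<le> lam \<Longrightarrow> 0 \<le> nc_term k lam x j"
  unfolding nc_term_def using chi2_even_nonneg[of "m+j" x]
  by (auto intro!: mult_nonneg_nonneg divide_nonneg_pos simp: algebra_simps)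

lemma nc_summable:
  assumes "k = 2*m" "1 \<le> m" "0 \<le> lam"
  shows "summable (nc_term k lam x)"
proof (rule summable_comparison_test'[OF summable_mult[OF pois_summable, of "1/2"]])
  fix j :: nat
  have c: "chi2_density (k + 2*j) x \<le> 1/2" using chi2_even_le_half[of "m+j" x] assms by (simp add: algebra_simps)
  have p: "0 \<le> exp (- lam / 2) * (lam / 2) ^ j / fact j" using assms by simp
  have "norm (nc_term k lam x j) = nc_term k lam x j" using nc_term_nonneg[OF assms] by simp
  also have "\<dots> \<le> (exp (- lam / 2) * (lam / 2) ^ j / fact j) * (1/2)"
    unfolding nc_term_def by (rule mult_left_mono[OF c p])
  also have "\<dots> = 1/2 * (exp (- lam / 2) * (lam / 2) ^ j / fact j)" by (rule mult.commute)
  finally show "norm (nc_term k lam x j) \<le> 1/2 * (exp (- lam / 2) * (lam / 2) ^ j / fact j)" .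
qed

lemma ncchi2_eq: "ncchi2_density k lam x = suminf (nc_term k lam x)"
  unfolding ncchi2_density_def nc_term_def by simp

lemma ncchi2_ge_term:
  assumes "k = 2*m" "1 \<le> m" "0 \<le> lam"
  shows "nc_term k lam x j \<le> ncchi2_density k lam x"
  unfolding ncchi2_eq using nc_summable[OF assms] nc_term_nonneg[OF assms] by (rule term_le_suminf)

lemma ncchi2_nonneg:
  assumes "k = 2*m" "1 \<le> m" "0 \<le> lam"
  shows "0 \<le> ncchi2_density k lam x"
  unfolding ncchi2_eq using nc_summable[OF assms] nc_term_nonneg[OF assms] by (rule suminf_nonneg)

lemma chi2_meas[measurable]: "chi2_density k \<in> borel_measurable borel"
  unfolding chi2_density_def[abs_def] by measurable

lemma ncchi2_meas[measurable]: "ncchi2_density k lam \<in> borel_measurable borel"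
  unfolding ncchi2_density_def[abs_def] by measurable

lemma chi2_int_le:
  assumes "1 \<le> n" shows "(\<integral>\<^sup>+x. ennreal (chi2_density (2*n) x) \<partial>lborel) \<le> 1"
proof -
  have "(\<integral>\<^sup>+x. ennreal (chi2_density (2*n) x) \<partial>lborel) \<le> (\<integral>\<^sup>+x. ennreal (erlang_density (n-1) (1/2) x * x^0) \<partial>lborel)"
  proof (intro nn_integral_mono ennreal_leI)
    fix x :: real
    obtain n' where n': "n = Suc n'" using assms by (cases n) auto
    show "chi2_density (2*n) x \<le> erlang_density (n-1) (1/2) x * x^0"
    proof (cases "x > 0")
      case True
      have "x^n' * exp (-x/2) / (2^(Suc n') * fact n') = (1/2)^(Suc n') * x^n' * exp (- (1/2) * x) / fact n'"
        by (simp add: power_one_over field_simps)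
      then show ?thesis unfolding chi2_even[OF assms] using True n' by (simp add: erlang_density_def)
    next
      case False
      then show ?thesis unfolding chi2_even[OF assms] using n' by simp
    qed
  qed
  also have "\<dots> = 1" by (subst nn_integral_erlang_ith_moment) auto
  finally show ?thesis .
qed

lemma ncchi2_int_le:
  assumes "k = 2*m" "1 \<le> m" "0 \<le> lam"
  shows "(\<integral>\<^sup>+x. ennreal (ncchi2_density k lam x) \<partial>lborel) \<le> 1"
proof -
  have "(\<integral>\<^sup>+x. ennreal (ncchi2_density k lam x) \<partial>lborel) = (\<integral>\<^sup>+x. (\<Sum>j. ennreal (nc_term k lam x j)) \<partial>lborel)"
    unfolding ncchi2_eq
  proof (rule nn_integral_cong)
    fix x :: real
    show "ennreal (suminf (nc_term k lam x)) = (\<Sum>j. ennreal (nc_term k lam x j))"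
      by (rule suminf_ennreal2[symmetric]) (rule nc_term_nonneg[OF assms], rule nc_summable[OF assms])
  qed
  also have "\<dots> = (\<Sum>j. \<integral>\<^sup>+x. ennreal (nc_term k lam x j) \<partial>lborel)"
    by (rule nn_integral_suminf) (unfold nc_term_def, measurable)
  also have "\<dots> \<le> (\<Sum>j. ennreal (exp (- lam / 2) * (lam / 2) ^ j / fact j))"
  proof (rule suminf_le[OF _ summableI summableI])
    fix j
    have "(\<integral>\<^sup>+x. ennreal (nc_term k lam x j) \<partial>lborel)
        = ennreal (exp (- lam / 2) * (lam / 2) ^ j / fact j) * (\<integral>\<^sup>+x. ennreal (chi2_density (2*(m+j)) x) \<partial>lborel)"
    proof -
      have kj: "k + 2*j = 2*(m+j)" using assms by simp
      have pw: "ennreal (nc_term k lam x j) = ennreal (exp (- lam / 2) * (lam / 2) ^ j / fact j) * ennreal (chi2_density (2*(m+j)) x)" for x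
      proof -
        have "nc_term k lam x j = (exp (- lam / 2) * (lam / 2) ^ j / fact j) * chi2_density (2*(m+j)) x"
          unfolding nc_term_def kj ..
        moreover have "0 \<le> exp (- lam / 2) * (lam / 2) ^ j / fact j" using assms by simp
        moreover have "0 \<le> chi2_density (2*(m+j)) x" using assms by (intro chi2_even_nonneg) simp
        ultimately show ?thesis by (metis ennreal_mult)
      qed
      have "(\<integral>\<^sup>+x. ennreal (nc_term k lam x j) \<partial>lborel) = (\<integral>\<^sup>+x. ennreal (exp (- lam / 2) * (lam / 2) ^ j / fact j) * ennreal (chi2_density (2*(m+j)) x) \<partial>lborel)"
        by (rule nn_integral_cong) (rule pw)
      also have "\<dots> = ennreal (exp (- lam / 2) * (lam / 2) ^ j / fact j) * (\<integral>\<^sup>+x. ennreal (chi2_density (2*(m+j)) x) \<partial>lborel)"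
        by (rule nn_integral_cmult) measurable
      finally show ?thesis .
    qed
    also have "\<dots> \<le> ennreal (exp (- lam / 2) * (lam / 2) ^ j / fact j) * 1"
      using assms by (intro mult_left_mono chi2_int_le) auto
    finally show "(\<integral>\<^sup>+x. ennreal (nc_term k lam x j) \<partial>lborel) \<le> ennreal (exp (- lam / 2) * (lam / 2) ^ j / fact j)" by simp
  qed
  also have "\<dots> = ennreal 1"
    using pois_sum[of lam] pois_summable[of lam] assms by (subst suminf_ennreal2) auto
  finally show ?thesis by simp
qed



lemma g_meas[measurable]: "(\<lambda>(x1::real, x2::real). (x1 / c1) / (x2 / c2)) \<in> borel_measurable (lborel \<Otimes>\<^sub>M lborel)"
  by measurable

lemma f_meas[measurable]: "(\<lambda>(x1, x2). ennreal (ncchi2_density n1 lam x1 * chi2_density n2 x2)) \<in> borel_measurable (lborel \<Otimes>\<^sub>M lborel)"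
  by measurable

lemma ncF_emeasure:
  assumes "A \<in> sets borel"
  shows "emeasure (ncF n1 n2 lam) A =
    (\<integral>\<^sup>+z. (\<lambda>(x1, x2). ennreal (ncchi2_density n1 lam x1 * chi2_density n2 x2)) z *
        indicator ((\<lambda>(x1, x2). (x1 / real n1) / (x2 / real n2)) -` A) z \<partial>(lborel \<Otimes>\<^sub>M lborel))"
proof -
  let ?g = "(\<lambda>(x1, x2). (x1 / real n1) / (x2 / real n2))"
  let ?f = "(\<lambda>(x1, x2). ennreal (ncchi2_density n1 lam x1 * chi2_density n2 x2))"
  have mg: "?g \<in> borel_measurable (lborel \<Otimes>\<^sub>M lborel)" by (rule g_meas)
  have A': "A \<in> sets lborel" using assms by simp
  have pre: "?g -` A \<in> sets (lborel \<Otimes>\<^sub>M lborel)"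
    using measurable_sets[OF mg assms] by (simp add: space_pair_measure)
  have mg2: "?g \<in> measurable (density (lborel \<Otimes>\<^sub>M lborel) ?f) lborel"
    using mg by simp
  have "emeasure (ncF n1 n2 lam) A = emeasure (density (lborel \<Otimes>\<^sub>M lborel) ?f) (?g -` A \<inter> space (density (lborel \<Otimes>\<^sub>M lborel) ?f))"
    unfolding ncF_def by (rule emeasure_distr[OF mg2 A'])
  also have "\<dots> = emeasure (density (lborel \<Otimes>\<^sub>M lborel) ?f) (?g -` A)"
    by (simp add: space_pair_measure)
  also have "\<dots> = (\<integral>\<^sup>+z. ?f z * indicator (?g -` A) z \<partial>(lborel \<Otimes>\<^sub>M lborel))"
    by (rule emeasure_density[OF f_meas pre])
  finally show ?thesis .
qed

lemma ncF_total:
  assumes "n1 = 2*m1" "1 \<le> m1" "n2 = 2*m2" "1 \<le> m2" "0 \<le> lam" "A \<in> sets borel"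
  shows "emeasure (ncF n1 n2 lam) A \<le> 1"
proof -
  let ?f = "\<lambda>(x1, x2). ennreal (ncchi2_density n1 lam x1 * chi2_density n2 x2)"
  have "emeasure (ncF n1 n2 lam) A \<le> (\<integral>\<^sup>+z. ?f z \<partial>(lborel \<Otimes>\<^sub>M lborel))"
    unfolding ncF_emeasure[OF assms(6)] by (intro nn_integral_mono) (auto split: split_indicator)
  also have "\<dots> = (\<integral>\<^sup>+x1. \<integral>\<^sup>+x2. ?f (x1, x2) \<partial>lborel \<partial>lborel)"
    by (rule lborel.nn_integral_fst[symmetric]) measurable
  also have "\<dots> = (\<integral>\<^sup>+x1. ennreal (ncchi2_density n1 lam x1) * (\<integral>\<^sup>+x2. ennreal (chi2_density n2 x2) \<partial>lborel) \<partial>lborel)"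
  proof (rule nn_integral_cong)
    fix x1 :: real
    have "(\<integral>\<^sup>+x2. ?f (x1, x2) \<partial>lborel) = (\<integral>\<^sup>+x2. ennreal (ncchi2_density n1 lam x1) * ennreal (chi2_density n2 x2) \<partial>lborel)"
    proof (rule nn_integral_cong)
      fix x2 :: real
      have "0 \<le> ncchi2_density n1 lam x1" using assms by (intro ncchi2_nonneg) auto
      moreover have "0 \<le> chi2_density n2 x2" using assms chi2_even_nonneg by simp
      ultimately show "?f (x1, x2) = ennreal (ncchi2_density n1 lam x1) * ennreal (chi2_density n2 x2)"
        by (simp add: ennreal_mult)
    qed
    also have "\<dots> = ennreal (ncchi2_density n1 lam x1) * (\<integral>\<^sup>+x2. ennreal (chi2_density n2 x2) \<partial>lborel)"
      by (rule nn_integral_cmult) measurable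
    finally show "(\<integral>\<^sup>+x2. ?f (x1, x2) \<partial>lborel) = ennreal (ncchi2_density n1 lam x1) * (\<integral>\<^sup>+x2. ennreal (chi2_density n2 x2) \<partial>lborel)" .
  qed
  also have "\<dots> = (\<integral>\<^sup>+x1. ennreal (ncchi2_density n1 lam x1) \<partial>lborel) * (\<integral>\<^sup>+x2. ennreal (chi2_density n2 x2) \<partial>lborel)"
    by (rule nn_integral_multc) measurable
  also have "\<dots> \<le> 1 * 1"
    using ncchi2_int_le[OF assms(1,2,5)] chi2_int_le[OF assms(4)] assms(3) by (intro mult_mono) auto
  finally show ?thesis by simp
qed

lemma box_lower:
  fixes f :: "real \<times> real \<Rightarrow> ennreal" and S :: "(real \<times> real) set"
  assumes "{X..X+1} \<times> {Y..Y+1} \<subseteq> S" "\<And>x y. x \<in> {X..X+1} \<Longrightarrow> y \<in> {Y..Y+1} \<Longrightarrow> ennreal c \<le> f (x, y)"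
  shows "ennreal c \<le> (\<integral>\<^sup>+z. f z * indicator S z \<partial>(lborel \<Otimes>\<^sub>M lborel))"
proof -
  have "(\<integral>\<^sup>+z. ennreal c * indicator ({X..X+1} \<times> {Y..Y+1}) z \<partial>(lborel \<Otimes>\<^sub>M lborel))
      = ennreal c * emeasure (lborel \<Otimes>\<^sub>M lborel) ({X..X+1} \<times> {Y..Y+1})"
    by (rule nn_integral_cmult_indicator) simp
  also have "emeasure (lborel \<Otimes>\<^sub>M lborel) ({X..X+1} \<times> {Y..Y+1}) = 1"
    by (subst lborel.emeasure_pair_measure_Times) auto
  finally have e: "(\<integral>\<^sup>+z. ennreal c * indicator ({X..X+1} \<times> {Y..Y+1}) z \<partial>(lborel \<Otimes>\<^sub>M lborel)) = ennreal c" by simp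
  have "(\<integral>\<^sup>+z. ennreal c * indicator ({X..X+1} \<times> {Y..Y+1}) z \<partial>(lborel \<Otimes>\<^sub>M lborel)) \<le> (\<integral>\<^sup>+z. f z * indicator S z \<partial>(lborel \<Otimes>\<^sub>M lborel))"
  proof (rule nn_integral_mono)
    fix z :: "real \<times> real"
    show "ennreal c * indicator ({X..X+1} \<times> {Y..Y+1}) z \<le> f z * indicator S z"
    proof (cases "z \<in> {X..X+1} \<times> {Y..Y+1}")
      case True
      then obtain x y where z: "z = (x,y)" "x \<in> {X..X+1}" "y \<in> {Y..Y+1}" by auto
      then show ?thesis using assms True by (auto simp: subset_iff)
    qed simp
  qed
  then show ?thesis using e by simp
qed




lemma chi2_box:
  assumes "1 \<le> n" "0 < X" "X \<le> x" "x \<le> X + 1"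
  shows "X^(n-1) * exp (-(X+1)/2) / (2^n * fact (n-1)) \<le> chi2_density (2*n) x"
proof -
  have x: "x > 0" using assms by simp
  have "X^(n-1) * exp (-(X+1)/2) \<le> x^(n-1) * exp (-x/2)"
    using assms by (intro mult_mono power_mono) auto
  then have "X^(n-1) * exp (-(X+1)/2) / (2^n * fact (n-1)) \<le> x^(n-1) * exp (-x/2) / (2^n * fact (n-1))"
    by (intro divide_right_mono) auto
  then show ?thesis using x by (simp add: chi2_even[OF assms(1)])
qed

lemma pmiss_emeasure_le1:
  assumes "1 \<le> NR" "2 \<le> Ns" "1 \<le> L" "0 \<le> eta"
  shows "emeasure (ncF (2 * NR * L) (2 * NR * L * (Ns - 1)) (real L * eta)) {.. real (Ns - 1) * \<gamma>} \<le> 1"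
proof -
  have "1 \<le> NR * L * (Ns - 1)" using assms by simp
  moreover have "1 \<le> NR * L" using assms by simp
  ultimately show ?thesis
    using ncF_total[of "2 * NR * L" "NR * L" "2 * NR * L * (Ns - 1)" "NR * L * (Ns - 1)" "real L * eta" "{.. real (Ns - 1) * \<gamma>}"] assms
    by simp
qed

lemma p_miss_bounds:
  assumes "1 \<le> NR" "2 \<le> Ns" "1 \<le> L" "0 \<le> eta"
  shows "0 \<le> p_miss NR Ns \<gamma> L eta" "p_miss NR Ns \<gamma> L eta \<le> 1"
proof -
  show "0 \<le> p_miss NR Ns \<gamma> L eta" unfolding p_miss_def by simp
  have "enn2real (emeasure (ncF (2 * NR * L) (2 * NR * L * (Ns - 1)) (real L * eta)) {.. real (Ns - 1) * \<gamma>}) \<le> enn2real 1"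
    using pmiss_emeasure_le1[OF assms] by (intro enn2real_mono) auto
  then show "p_miss NR Ns \<gamma> L eta \<le> 1" unfolding p_miss_def measure_def by simp
qed

lemma p_miss_lower:
  fixes NR Ns L j :: nat and \<gamma> a b eta X Y :: real
  assumes NR: "1 \<le> NR" and Ns: "2 \<le> Ns" and L: "1 \<le> L" and g: "0 < \<gamma>"
    and ab: "0 \<le> a" "a \<le> eta" "eta \<le> b"
    and XY: "0 < X" "0 < Y" "X + 1 \<le> \<gamma> * Y"
  shows "exp (- real L * b / 2) * (real L * a / 2) ^ j / fact j
     * (X^(NR*L+j-1) * exp (-(X+1)/2) / (2^(NR*L+j) * fact (NR*L+j-1)))
     * (Y^(NR*L*(Ns-1)-1) * exp (-(Y+1)/2) / (2^(NR*L*(Ns-1)) * fact (NR*L*(Ns-1)-1)))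
     \<le> p_miss NR Ns \<gamma> L eta"
    (is "?P * ?d1 * ?d2 \<le> _")
proof -
  define m1 where "m1 = NR * L"
  define m2 where "m2 = NR * L * (Ns - 1)"
  define lam where "lam = real L * eta"
  have m1: "1 \<le> m1" using NR L by (simp add: m1_def)
  have m2: "1 \<le> m2" using NR L Ns by (simp add: m2_def)
  have lam: "0 \<le> lam" using ab L by (simp add: lam_def)
  have n1: "2 * NR * L = 2 * m1" by (simp add: m1_def)
  have n2: "2 * NR * L * (Ns - 1) = 2 * m2" by (simp add: m2_def)
  let ?f = "\<lambda>(x1, x2). ennreal (ncchi2_density (2*m1) lam x1 * chi2_density (2*m2) x2)"
  let ?g = "\<lambda>(x1, x2). (x1 / real (2*m1)) / (x2 / real (2*m2))"
  have Pnn: "0 \<le> ?P" using ab by simp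
  have d1nn: "0 \<le> ?d1" using XY by simp
  have d2nn: "0 \<le> ?d2" using XY by simp
  have Ple: "?P \<le> exp (- lam / 2) * (lam / 2) ^ j / fact j"
  proof -
    have "exp (- real L * b / 2) \<le> exp (- lam / 2)" using ab L by (simp add: lam_def)
    moreover have "(real L * a / 2) ^ j \<le> (lam / 2) ^ j"
      using ab L by (intro power_mono) (auto simp: lam_def intro!: mult_left_mono)
    ultimately have "exp (- real L * b / 2) * (real L * a / 2) ^ j \<le> exp (- lam / 2) * (lam / 2) ^ j"
      using ab by (intro mult_mono) auto
    then show ?thesis by (intro divide_right_mono) auto
  qed
  have dens: "ennreal (?P * ?d1 * ?d2) \<le> ?f (x, y)" if x: "x \<in> {X..X+1}" and y: "y \<in> {Y..Y+1}" for x y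
  proof -
    have c1: "?d1 \<le> chi2_density (2*m1 + 2*j) x"
    proof -
      have "1 \<le> m1 + j" using m1 by simp
      from chi2_box[OF this XY(1), of x] x
      have "?d1 \<le> chi2_density (2*(m1+j)) x" by (simp add: m1_def)
      moreover have "2*(m1+j) = 2*m1 + 2*j" by simp
      ultimately show ?thesis by simp
    qed
    have "?P * ?d1 \<le> (exp (- lam / 2) * (lam / 2) ^ j / fact j) * chi2_density (2*m1 + 2*j) x"
      using Ple c1 Pnn d1nn by (intro mult_mono) auto
    also have "\<dots> = nc_term (2*m1) lam x j" unfolding nc_term_def ..
    also have "\<dots> \<le> ncchi2_density (2*m1) lam x"
      using m1 lam by (intro ncchi2_ge_term) auto
    finally have A: "?P * ?d1 \<le> ncchi2_density (2*m1) lam x" .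
    have B: "?d2 \<le> chi2_density (2*m2) y"
      using chi2_box[OF m2 XY(2), of y] y by (simp add: m2_def)
    have "?P * ?d1 * ?d2 \<le> ncchi2_density (2*m1) lam x * chi2_density (2*m2) y"
      using mult_mono[OF A B ncchi2_nonneg[OF refl m1 lam, of x] d2nn] .
    then show ?thesis by (simp add: ennreal_leI)
  qed
  have box: "{X..X+1} \<times> {Y..Y+1} \<subseteq> ?g -` {.. real (Ns - 1) * \<gamma>}"
  proof
    fix z assume "z \<in> {X..X+1} \<times> {Y..Y+1}"
    then obtain x y where z: "z = (x, y)" and x: "X \<le> x" "x \<le> X+1" and y: "Y \<le> y" "y \<le> Y+1" by auto
    have ypos: "y > 0" using y XY by simp
    have m1pos: "real m1 > 0" using m1 by simp
    have e: "(x / real (2*m1)) / (y / real (2*m2)) = x * real (Ns - 1) / y"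
    proof -
      have m2e: "real (2*m2) = real (2*m1) * real (Ns - 1)" by (simp add: m1_def m2_def)
      have ns: "real (Ns - 1) > 0" using Ns by simp
      show ?thesis unfolding m2e using ypos m1pos ns by (simp add: field_simps del: of_nat_mult)
    qed
    have "x \<le> \<gamma> * y"
    proof -
      have "x \<le> X + 1" by (rule x(2))
      also have "\<dots> \<le> \<gamma> * Y" by (rule XY(3))
      also have "\<dots> \<le> \<gamma> * y" using g y by simp
      finally show ?thesis .
    qed
    then have "x * real (Ns - 1) / y \<le> real (Ns - 1) * \<gamma>"
    proof -
      have "x * real (Ns - 1) \<le> (\<gamma> * y) * real (Ns - 1)"
        by (rule mult_right_mono) (use \<open>x \<le> \<gamma> * y\<close> in auto)
      then show ?thesis using ypos by (simp add: divide_le_eq algebra_simps)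
    qed
    then show "z \<in> ?g -` {.. real (Ns - 1) * \<gamma>}" using z e by simp
  qed
  have em: "ennreal (?P * ?d1 * ?d2) \<le> emeasure (ncF (2*m1) (2*m2) lam) {.. real (Ns - 1) * \<gamma>}"
    unfolding ncF_emeasure[OF atMost_borel]
    by (rule box_lower[OF box]) (rule dens)
  have fin: "emeasure (ncF (2*m1) (2*m2) lam) {.. real (Ns - 1) * \<gamma>} \<le> 1"
    using pmiss_emeasure_le1[OF NR Ns L, of eta \<gamma>] ab unfolding m1_def m2_def lam_def by (simp add: mult.assoc)
  have "0 \<le> ?P * ?d1 * ?d2" using Pnn d1nn d2nn by (intro mult_nonneg_nonneg)
  then have "?P * ?d1 * ?d2 = enn2real (ennreal (?P * ?d1 * ?d2))" by (rule enn2real_ennreal[symmetric])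
  also have "\<dots> \<le> enn2real (emeasure (ncF (2*m1) (2*m2) lam) {.. real (Ns - 1) * \<gamma>})"
    using em fin by (intro enn2real_mono) (auto simp: top_unique order.strict_trans1)
  also have "\<dots> = p_miss NR Ns \<gamma> L eta"
    unfolding p_miss_def measure_def m1_def m2_def lam_def by (simp add: mult.assoc)
  finally show ?thesis .
qed




definition Crate :: "real \<Rightarrow> real \<Rightarrow> real" where
  "Crate x m = x/2 - m * ln (x / (2*m)) - m"

lemma Crate_nonneg: assumes "0 < x" "0 < m" shows "0 \<le> Crate x m"
proof -
  have "ln (x/(2*m)) \<le> x/(2*m) - 1" using assms by (intro ln_le_minus_one) auto
  then have "m * ln (x/(2*m)) \<le> m * (x/(2*m) - 1)" using assms by (intro mult_left_mono) auto
  also have "\<dots> = x/2 - m" using assms by (simp add: field_simps)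
  finally show ?thesis unfolding Crate_def by simp
qed

lemma Crate_mean: "0 < m \<Longrightarrow> Crate (2*m) m = 0"
  unfolding Crate_def by simp

lemma Crate_mono_m:
  assumes "0 < x" "x/2 \<le> m1" "m1 \<le> m2"
  shows "Crate x m1 \<le> Crate x m2"
proof -
  have m1: "0 < m1" using assms by simp
  have m2: "0 < m2" using assms by simp
  have l1: "ln (x/(2*m1)) = ln (x/2) - ln m1" using assms m1 by (simp add: ln_div ln_mult)
  have l2: "ln (x/(2*m2)) = ln (x/2) - ln m2" using assms m2 by (simp add: ln_div ln_mult)
  have lu: "ln (x/2) \<le> ln m1" using assms by simp
  have k: "ln (m1/m2) \<le> m1/m2 - 1" using m1 m2 by (intro ln_le_minus_one) auto
  have k2: "m2 * (ln m1 - ln m2) \<le> m1 - m2"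
  proof -
    have "m2 * ln (m1/m2) \<le> m2 * (m1/m2 - 1)" using k m2 by (intro mult_left_mono) auto
    moreover have "ln (m1/m2) = ln m1 - ln m2" using m1 m2 by (simp add: ln_div)
    moreover have "m2 * (m1/m2 - 1) = m1 - m2" using m2 by (simp add: field_simps)
    ultimately show ?thesis by simp
  qed
  have "(m2 - m1) * ln (x/2) \<le> (m2 - m1) * ln m1" using lu assms by (intro mult_left_mono) auto
  then show ?thesis unfolding Crate_def l1 l2 using k2 by (simp add: algebra_simps)
qed

lemma Crate_min:
  assumes "0 < x1" "0 < r" "0 \<le> \<beta>" "\<beta> \<le> \<beta>s"
  shows "Crate (min x1 (2*(r+\<beta>))) (r+\<beta>) \<le> Crate x1 (r+\<beta>s)"
proof (cases "x1 \<le> 2*(r+\<beta>)")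
  case True
  then show ?thesis using assms by (simp add: min_def, intro Crate_mono_m) auto
next
  case False
  then have "min x1 (2*(r+\<beta>)) = 2*(r+\<beta>)" by simp
  then show ?thesis using assms Crate_mean[of "r+\<beta>"] Crate_nonneg[of x1 "r+\<beta>s"] by simp
qed

lemma KL_nonneg:
  fixes \<beta>s e :: real
  assumes "0 < \<beta>s" "0 < e"
  shows "0 \<le> \<beta>s * ln (2*\<beta>s/e) - \<beta>s + e/2"
proof -
  have "ln (e/(2*\<beta>s)) \<le> e/(2*\<beta>s) - 1" using assms by (intro ln_le_minus_one) auto
  then have "\<beta>s * ln (e/(2*\<beta>s)) \<le> \<beta>s * (e/(2*\<beta>s) - 1)" using assms by (intro mult_left_mono) auto
  also have "\<dots> = e/2 - \<beta>s" using assms by (simp add: field_simps)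
  finally have "\<beta>s * ln (e/(2*\<beta>s)) \<le> e/2 - \<beta>s" .
  moreover have "ln (e/(2*\<beta>s)) = - ln (2*\<beta>s/e)" using assms by (simp add: ln_div)
  ultimately show ?thesis by simp
qed

lemma bracket_bound:
  fixes a b em \<delta> \<beta>s \<beta> :: real
  assumes "0 \<le> a" "a < b" "b \<le> em" "b - a \<le> \<delta>" "0 < \<beta>s"
    and bdef: "\<beta> = min \<beta>s (a/2)"
  shows "b/2 - \<beta> * ln (a/(2*\<beta>)) - \<beta> \<le> (\<beta>s * ln (2*\<beta>s/em) - \<beta>s + em/2) + \<delta>/2"
proof -
  have em: "0 < em" using assms by simp
  have K: "0 \<le> \<beta>s * ln (2*\<beta>s/em) - \<beta>s + em/2" using KL_nonneg[OF assms(5) em] .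
  show ?thesis
  proof (cases "a/2 \<le> \<beta>s")
    case True
    then have b: "\<beta> = a/2" using bdef by simp
    show ?thesis
    proof (cases "a = 0")
      case True then show ?thesis using b K assms by simp
    next
      case False
      have "a/(2*\<beta>) = 1" using b False by simp
      then have h: "\<beta> * ln (a/(2*\<beta>)) = 0" by simp
      have eq: "b/2 - \<beta> * ln (a/(2*\<beta>)) - \<beta> = (b - a)/2" unfolding h b by simp
      have d: "(b - a)/2 \<le> \<delta>/2" using assms(4) by simp
      show ?thesis unfolding eq using d K by linarith
    qed
  next
    case False
    then have b: "\<beta> = \<beta>s" using bdef by simp
    have a: "0 < a" using False assms by simp
    have l: "ln (a/(2*\<beta>s)) + ln (2*\<beta>s/em) = ln (a/em)"
      using a em assms by (simp add: ln_div)
    have "ln (em/a) \<le> em/a - 1" using a em by (intro ln_le_minus_one) auto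
    then have "\<beta>s * ln (em/a) \<le> \<beta>s * (em/a - 1)" using assms by (intro mult_left_mono) auto
    also have "\<dots> = (\<beta>s / a) * (em - a)" using a by (simp add: field_simps)
    also have "\<dots> \<le> (1/2) * (em - a)" using False a assms by (intro mult_right_mono) (auto simp: field_simps)
    finally have c: "\<beta>s * ln (em/a) \<le> (em - a)/2" by simp
    have "ln (em/a) = - ln (a/em)" using a em by (simp add: ln_div)
    then have "- \<beta>s * ln (a/em) \<le> (em - a)/2" using c by simp
    then show ?thesis unfolding b using l assms
      by (simp add: algebra_simps) (smt (verit) distrib_left)
  qed
qed




lemma Istar_eq:
  fixes NR Ns :: nat and \<gamma> em xs :: real
  assumes NR: "NR \<ge> 1" and Ns: "Ns \<ge> 2" and g: "\<gamma> > 0" and em: "em > 0" and xs: "xs > 0"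
    and sol: "(\<gamma> + 1) / (em * \<gamma>) * (xs^2 - real NR ^ 2) - xs - real NR - 2 * real NR * real (Ns - 1) = 0"
  defines "r \<equiv> real NR" and "M \<equiv> real NR * real (Ns - 1)"
    and "v \<equiv> (xs^2 - real NR^2) / (em * \<gamma>)" and "\<beta>s \<equiv> (xs - real NR) / 2"
  shows "xs > r" "v > 0" "\<beta>s > 0" "M > 0"
    "I_star NR Ns em \<gamma> xs = (\<beta>s * ln (2*\<beta>s/em) - \<beta>s + em/2) + Crate (\<gamma>* v) (r+\<beta>s) + Crate v M"
proof -
  have r: "r \<ge> 1" using NR by (simp add: r_def)
  show M: "M > 0" using NR Ns by (simp add: M_def)
  have sol': "(\<gamma> + 1) / (em * \<gamma>) * (xs^2 - r^2) = xs + r + 2*M"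
    using sol by (simp add: r_def M_def algebra_simps)
  show xr: "xs > r"
  proof (rule ccontr)
    assume "\<not> xs > r"
    then have "xs^2 \<le> r^2" using xs by (intro power_mono) auto
    then have "(\<gamma> + 1) / (em * \<gamma>) * (xs^2 - r^2) \<le> 0" using g em
      by (intro mult_nonneg_nonpos) auto
    then show False using sol' xs r M by simp
  qed
  have "r^2 < xs^2" using xr r by (intro power_strict_mono) auto
  then have sq: "xs^2 - r^2 > 0" by simp
  show v: "v > 0" unfolding v_def using sq g em by (simp add: r_def)
  show bs: "\<beta>s > 0" using xr by (simp add: \<beta>s_def r_def)
  have gv: "\<gamma> * em * v = xs^2 - r^2" unfolding v_def r_def using g em by simp
  have sqrt: "sqrt (r^2 + \<gamma> * em * v) = xs" unfolding gv using xs by simp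
  define q where "q = (xs - r) / em"
  have q: "q > 0" using xr em by (simp add: q_def)
  have qe: "\<gamma> * v / (r + sqrt (r^2 + \<gamma> * em * v)) = q"
  proof -
    have "\<gamma> * v = (xs^2 - r^2)/em" unfolding v_def r_def using g em by simp
    also have "\<dots> = (xs - r) * (xs + r) / em" by (simp add: power2_eq_square algebra_simps)
    finally have "\<gamma> * v / (r + xs) = q" unfolding q_def using xs r em by (simp add: field_simps)
    then show ?thesis unfolding sqrt by (simp add: add.commute)
  qed
  have I: "I_star NR Ns em \<gamma> xs = em/2 * (1 - q) + M * ln (2*M/v) - r * ln q"
    unfolding I_star_def Let_def qe[unfolded r_def v_def M_def] M_def r_def v_def
    by (simp add: q_def r_def mult.assoc)
  have bq: "2*\<beta>s/em = q" unfolding \<beta>s_def q_def r_def using em by (simp add: field_simps)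
  have rb: "2*(r+\<beta>s) = xs + r" unfolding \<beta>s_def r_def by (simp add: field_simps)
  have gq: "\<gamma> * v / (2*(r+\<beta>s)) = q"
  proof -
    have "\<gamma> * v = (xs^2 - r^2)/em" unfolding v_def r_def using g em by simp
    also have "\<dots> = (xs - r) * (xs + r) / em" by (simp add: power2_eq_square algebra_simps)
    finally show ?thesis unfolding rb q_def using xs r em by (simp add: field_simps)
  qed
  have lv: "ln (v/(2*M)) = - ln (2*M/v)" using v M by (simp add: ln_div)
  have gv1: "(\<gamma> + 1) * v = xs + r + 2*M"
    using sol' unfolding v_def r_def using g em by (simp add: field_simps)
  have "(\<beta>s * ln (2*\<beta>s/em) - \<beta>s + em/2) + Crate (\<gamma>* v) (r+\<beta>s) + Crate v M
      = \<beta>s * ln q - \<beta>s + em/2 + (\<gamma>* v/2 - (r+\<beta>s) * ln q - (r+\<beta>s)) + (v/2 + M * ln (2*M/v) - M)"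
    unfolding Crate_def bq gq lv by simp
  also have "\<dots> = em/2 - r * ln q + M * ln (2*M/v) + ((\<gamma>+1)* v/2 - 2*\<beta>s - r - M)"
    by (simp add: algebra_simps)
  also have "(\<gamma>+1)* v/2 - 2*\<beta>s - r - M = - \<beta>s"
    using gv1 unfolding \<beta>s_def r_def by (simp add: field_simps)
  also have "em/2 - r * ln q + M * ln (2*M/v) + - \<beta>s = I_star NR Ns em \<gamma> xs"
    unfolding I bq[symmetric] using em by (simp add: algebra_simps)
  finally show "I_star NR Ns em \<gamma> xs = (\<beta>s * ln (2*\<beta>s/em) - \<beta>s + em/2) + Crate (\<gamma>* v) (r+\<beta>s) + Crate v M" ..
qed




lemma inv_lim: "(\<lambda>L. 1 / real L) \<longlonglongrightarrow> 0"
  by (rule lim_1_over_n)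

lemma floor_lim:
  assumes "0 \<le> \<beta>"
  shows "(\<lambda>L. real (nat \<lfloor>\<beta> * real L\<rfloor>) / real L) \<longlonglongrightarrow> \<beta>"
proof (rule tendsto_sandwich)
  show "(\<lambda>L. \<beta> - 1 / real L) \<longlonglongrightarrow> \<beta>" using tendsto_diff[OF tendsto_const inv_lim, of \<beta>] by simp
  show "(\<lambda>L. \<beta>) \<longlonglongrightarrow> \<beta>" by simp
  show "eventually (\<lambda>L. \<beta> - 1 / real L \<le> real (nat \<lfloor>\<beta> * real L\<rfloor>) / real L) sequentially"
    using eventually_ge_at_top[of "1::nat"]
  proof eventually_elim
    case (elim L)
    have "\<beta> * real L - 1 \<le> real (nat \<lfloor>\<beta> * real L\<rfloor>)" using assms
      by (smt (verit, best) of_nat_nat real_of_int_floor_add_one_ge zero_le_floor mult_nonneg_nonneg of_nat_0_le_iff)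
    then have "(\<beta> * real L - 1) / real L \<le> real (nat \<lfloor>\<beta> * real L\<rfloor>) / real L"
      using elim by (intro divide_right_mono) auto
    then show ?case using elim by (simp add: field_simps)
  qed
  show "eventually (\<lambda>L. real (nat \<lfloor>\<beta> * real L\<rfloor>) / real L \<le> \<beta>) sequentially"
    using eventually_ge_at_top[of "1::nat"]
  proof eventually_elim
    case (elim L)
    have "real (nat \<lfloor>\<beta> * real L\<rfloor>) \<le> \<beta> * real L" using assms by simp
    then have "real (nat \<lfloor>\<beta> * real L\<rfloor>) / real L \<le> \<beta> * real L / real L"
      using elim by (intro divide_right_mono) auto
    then show ?case using elim by simp
  qed
qed

lemma ln_over_lim:
  fixes n :: "nat \<Rightarrow> real"
  assumes lim: "(\<lambda>L. n L / real L) \<longlonglongrightarrow> c" and c: "0 < c"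
  shows "(\<lambda>L. ln (n L) / real L) \<longlonglongrightarrow> 0"
proof -
  have ev: "eventually (\<lambda>L. n L / real L > 0) sequentially"
    using order_tendstoD(1)[OF lim c] .
  have "(\<lambda>L. ln (n L / real L) * (1 / real L) + ln (real L) / real L) \<longlonglongrightarrow> ln c * 0 + 0"
    by (intro tendsto_intros lim inv_lim lim_ln_over_n) (use c in auto)
  moreover have "eventually (\<lambda>L. ln (n L / real L) * (1 / real L) + ln (real L) / real L = ln (n L) / real L) sequentially"
    using ev eventually_ge_at_top[of "1::nat"]
  proof eventually_elim
    case (elim L)
    then have "n L > 0" by (simp add: zero_less_divide_iff)
    then show ?case using elim by (simp add: ln_div add_divide_distrib[symmetric] diff_divide_distrib)
  qed
  ultimately show ?thesis by (auto intro: Lim_transform_eventually)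
qed

lemma chi_piece:
  fixes n :: "nat \<Rightarrow> nat" and X :: "nat \<Rightarrow> real"
  assumes ln: "(\<lambda>L. real (n L) / real L) \<longlonglongrightarrow> c" and c: "0 < c"
    and lX: "(\<lambda>L. X L / real L) \<longlonglongrightarrow> xc" and xc: "0 < xc"
  shows "(\<lambda>L. (real (n L - 1) * ln (X L) - (X L + 1)/2 - real (n L) * ln 2
      - (real (n L - 1) * ln (real (n L - 1)) - real (n L - 1) + ln (real (n L - 1)) + 1)) / real L)
     \<longlonglongrightarrow> - Crate xc c"
proof -
  have ev1: "eventually (\<lambda>L. real (n L) / real L > c/2) sequentially"
    using order_tendstoD(1)[OF ln, of "c/2"] c by simp
  have ev2: "eventually (\<lambda>L. X L / real L > 0) sequentially"
    using order_tendstoD(1)[OF lX xc] .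
  have ev3: "eventually (\<lambda>L. 1 / real L < c/2) sequentially"
    using order_tendstoD(2)[OF inv_lim, of "c/2"] c by simp
  have ln': "(\<lambda>L. real (n L) / real L - 1 / real L) \<longlonglongrightarrow> c"
    using tendsto_diff[OF ln inv_lim] by simp
  have ln'': "(\<lambda>L. (real (n L) - 1) / real L) \<longlonglongrightarrow> c"
    using ln' by (simp add: diff_divide_distrib)
  have lnl: "(\<lambda>L. ln (real (n L) - 1) / real L) \<longlonglongrightarrow> 0"
    by (rule ln_over_lim[OF ln'' c])
  have lim: "(\<lambda>L. ((real (n L) / real L - 1 / real L) * ln ((X L / real L) / (real (n L) / real L - 1 / real L))
       - (X L / real L) / 2 - (1 / real L) / 2 - (real (n L) / real L) * ln 2
       + (real (n L) / real L - 1 / real L) - ln (real (n L) - 1) / real L - 1 / real L))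
     \<longlonglongrightarrow> (c * ln (xc / c) - xc/2 - 0/2 - c * ln 2 + c - 0 - 0)"
    by (intro tendsto_intros ln ln' lX inv_lim lnl) (use c xc in auto)
  have eq: "c * ln (xc / c) - xc/2 - 0/2 - c * ln 2 + c - 0 - 0 = - Crate xc c"
    unfolding Crate_def using c xc by (simp add: ln_div ln_mult algebra_simps)
  have "eventually (\<lambda>L. ((real (n L) / real L - 1 / real L) * ln ((X L / real L) / (real (n L) / real L - 1 / real L))
       - (X L / real L) / 2 - (1 / real L) / 2 - (real (n L) / real L) * ln 2
       + (real (n L) / real L - 1 / real L) - ln (real (n L) - 1) / real L - 1 / real L)
     = (real (n L - 1) * ln (X L) - (X L + 1)/2 - real (n L) * ln 2
      - (real (n L - 1) * ln (real (n L - 1)) - real (n L - 1) + ln (real (n L - 1)) + 1)) / real L) sequentially"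
    using ev1 ev2 ev3 eventually_ge_at_top[of "1::nat"]
  proof eventually_elim
    case (elim L)
    have Lp: "real L > 0" using elim by simp
    have nL: "real (n L) > 1"
    proof -
      have "1 / real L < c/2" "c/2 < real (n L) / real L" using elim by auto
      then have "1 / real L < real (n L) / real L" by linarith
      then show ?thesis using Lp by (simp add: divide_less_cancel)
    qed
    then have n1: "n L \<ge> 1" by simp
    have rn: "real (n L - 1) = real (n L) - 1" using n1 by (simp add: of_nat_diff)
    have XL: "X L > 0" using elim Lp by (simp add: zero_less_divide_iff)
    have a1: "real (n L) / real L - 1 / real L = (real (n L) - 1) / real L" by (simp add: diff_divide_distrib)
    have a2: "(X L / real L) / ((real (n L) - 1) / real L) = X L / (real (n L) - 1)" using Lp by simp
    have a3: "ln (X L / (real (n L) - 1)) = ln (X L) - ln (real (n L) - 1)" using XL nL by (simp add: ln_div)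
    show ?case unfolding a1 a2 a3 rn using Lp by (simp add: field_simps)
  qed
  then show ?thesis using Lim_transform_eventually[OF lim] eq by simp
qed

lemma pois_piece:
  fixes \<beta> a :: real
  assumes b: "0 < \<beta>" and a: "0 < a"
  shows "(\<lambda>L. (real (nat \<lfloor>\<beta> * real L\<rfloor>) * ln (real L * a / 2)
      - (real (nat \<lfloor>\<beta> * real L\<rfloor>) * ln (real (nat \<lfloor>\<beta> * real L\<rfloor>)) - real (nat \<lfloor>\<beta> * real L\<rfloor>)
         + ln (real (nat \<lfloor>\<beta> * real L\<rfloor>)) + 1)) / real L)
     \<longlonglongrightarrow> \<beta> * ln (a / (2 * \<beta>)) + \<beta>"
proof -
  define j where "j L = real (nat \<lfloor>\<beta> * real L\<rfloor>)" for L
  have lj: "(\<lambda>L. j L / real L) \<longlonglongrightarrow> \<beta>" unfolding j_def using floor_lim b by simp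
  have ev: "eventually (\<lambda>L. j L / real L > 0) sequentially"
    using order_tendstoD(1)[OF lj b] .
  have lim: "(\<lambda>L. (j L / real L) * ln ((a/2) / (j L / real L)) + j L / real L - ln (j L) / real L - 1 / real L)
      \<longlonglongrightarrow> \<beta> * ln ((a/2) / \<beta>) + \<beta> - 0 - 0"
    by (intro tendsto_intros lj inv_lim ln_over_lim[OF lj b]) (use a b in auto)
  have "eventually (\<lambda>L. (j L / real L) * ln ((a/2) / (j L / real L)) + j L / real L - ln (j L) / real L - 1 / real L
     = (j L * ln (real L * a / 2) - (j L * ln (j L) - j L + ln (j L) + 1)) / real L) sequentially"
    using ev eventually_ge_at_top[of "1::nat"]
  proof eventually_elim
    case (elim L)
    have Lp: "real L > 0" using elim by simp
    have jp: "j L > 0" using elim Lp by (simp add: zero_less_divide_iff)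
    have e1: "(a/2) / (j L / real L) = real L * a / 2 / j L" using Lp by simp
    have e2: "ln (real L * a / 2 / j L) = ln (real L * a / 2) - ln (j L)" using Lp jp a by (intro ln_divide_pos) auto
    show ?case unfolding e1 e2 using Lp by (simp add: field_simps)
  qed
  then have "(\<lambda>L. (j L * ln (real L * a / 2) - (j L * ln (j L) - j L + ln (j L) + 1)) / real L)
      \<longlonglongrightarrow> \<beta> * ln ((a/2) / \<beta>) + \<beta> - 0 - 0"
    by (rule Lim_transform_eventually[OF lim])
  then show ?thesis unfolding j_def by simp
qed




lemma ln_fact_le: "ln (fact n) \<le> real n * ln (real n) - real n + ln (real n) + 1"
proof (induction n)
  case 0 then show ?case by simp
next
  case (Suc n)
  show ?case
  proof (cases "n = 0")
    case True then show ?thesis by simp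
  next
    case False
    then have n: "real n \<ge> 1" by simp
    have key: "(real n + 1) * (ln (real n + 1) - ln (real n)) \<ge> 1"
    proof -
      have "ln (real n / (real n + 1)) \<le> real n / (real n + 1) - 1"
        using n by (intro ln_le_minus_one) auto
      also have "\<dots> = - 1 / (real n + 1)" using n by (simp add: field_simps)
      finally have "ln (real n) - ln (real n + 1) \<le> - 1 / (real n + 1)"
        using n by (simp add: ln_divide_pos)
      then show ?thesis using n by (simp add: field_simps)
    qed
    have "ln (fact (Suc n)) = ln (fact n) + ln (real n + 1)"
      by (simp add: ln_mult add.commute)
    also have "\<dots> \<le> real n * ln (real n) - real n + ln (real n) + 1 + ln (real n + 1)"
      using Suc.IH by simp
    also have "\<dots> \<le> real (Suc n) * ln (real (Suc n)) - real (Suc n) + ln (real (Suc n)) + 1"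
      using key by (simp add: algebra_simps)
    finally show ?thesis .
  qed
qed

definition chi_part :: "nat \<Rightarrow> real \<Rightarrow> real" where
  "chi_part n X = X^(n-1) * exp (-(X+1)/2) / (2^n * fact (n-1))"

definition ChiE :: "nat \<Rightarrow> real \<Rightarrow> real" where
  "ChiE n X = real (n - 1) * ln X - (X + 1)/2 - real n * ln 2
      - (real (n - 1) * ln (real (n - 1)) - real (n - 1) + ln (real (n - 1)) + 1)"

definition pois_part :: "nat \<Rightarrow> real \<Rightarrow> real \<Rightarrow> nat \<Rightarrow> real" where
  "pois_part L a b j = exp (- real L * b / 2) * (real L * a / 2) ^ j / fact j"

definition PoisE :: "nat \<Rightarrow> real \<Rightarrow> nat \<Rightarrow> real" where
  "PoisE L a j = real j * ln (real L * a / 2) - (real j * ln (real j) - real j + ln (real j) + 1)"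

lemma chi_part_ln:
  assumes "0 < X"
  shows "0 < chi_part n X" "ChiE n X \<le> ln (chi_part n X)"
proof -
  show pos: "0 < chi_part n X" unfolding chi_part_def using assms by simp
  have "ln (chi_part n X) = ln (X^(n-1)) + ln (exp (-(X+1)/2)) - (ln (2^n) + ln (fact (n-1)))"
    unfolding chi_part_def using assms by (simp add: ln_divide_pos ln_mult)
  also have "\<dots> = real (n-1) * ln X - (X+1)/2 - real n * ln 2 - ln (fact (n-1))"
    by (simp add: ln_realpow field_simps)
  finally have e: "ln (chi_part n X) = real (n-1) * ln X - (X+1)/2 - real n * ln 2 - ln (fact (n-1))" .
  show "ChiE n X \<le> ln (chi_part n X)"
    unfolding e ChiE_def using ln_fact_le[of "n-1"] by simp
qed

lemma pois_part_ln:
  assumes "1 \<le> L" "0 \<le> a" "0 < a \<or> j = 0"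
  shows "0 < pois_part L a b j" "- real L * b / 2 + PoisE L a j \<le> ln (pois_part L a b j)"
proof -
  have pw: "0 < (real L * a / 2) ^ j"
  proof (cases "j = 0")
    case False
    then have "0 < a" using assms by simp
    then show ?thesis using assms by (intro zero_less_power) simp
  qed simp
  show "0 < pois_part L a b j" unfolding pois_part_def using pw by simp
  have "ln (pois_part L a b j) = ln (exp (- real L * b / 2)) + ln ((real L * a / 2) ^ j) - ln (fact j)"
  proof -
    have "ln (exp (- real L * b / 2) * (real L * a / 2) ^ j / fact j) = ln (exp (- real L * b / 2) * (real L * a / 2) ^ j) - ln (fact j)"
      by (rule ln_divide_pos) (use pw in simp_all)
    also have "ln (exp (- real L * b / 2) * (real L * a / 2) ^ j) = ln (exp (- real L * b / 2)) + ln ((real L * a / 2) ^ j)"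
      by (rule ln_mult_pos) (use pw in simp_all)
    finally show ?thesis unfolding pois_part_def .
  qed
  also have "\<dots> = - real L * b / 2 + real j * ln (real L * a / 2) - ln (fact j)"
    by (simp add: ln_realpow)
  finally show "- real L * b / 2 + PoisE L a j \<le> ln (pois_part L a b j)"
    unfolding PoisE_def using ln_fact_le[of j] by simp
qed





lemma cell_bound:
  fixes NR Ns :: nat and \<gamma> em xs a b :: real and \<Omega> S :: "real set" and p \<eta> :: "real \<Rightarrow> real"
  assumes NR: "NR \<ge> 1" and Ns: "Ns \<ge> 2" and g: "\<gamma> > 0" and em: "em > 0" and xs: "xs > 0"
    and sol: "(\<gamma> + 1) / (em * \<gamma>) * (xs^2 - real NR ^ 2) - xs - real NR - 2 * real NR * real (Ns - 1) = 0"
    and ab: "0 \<le> a" "a < b" "b \<le> em"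
    and SO: "S \<subseteq> \<Omega>" and Sab: "\<forall>\<phi>\<in>S. a \<le> \<eta> \<phi> \<and> \<eta> \<phi> \<le> b"
    and p_nonneg: "\<forall>\<phi>\<in>\<Omega>. p \<phi> \<ge> 0" and eta_nonneg: "\<forall>\<phi>\<in>\<Omega>. \<eta> \<phi> \<ge> 0"
    and Qpos: "0 < (\<integral>\<^sup>+\<phi>. ennreal (p \<phi>) * indicator S \<phi> \<partial>lborel)"
    and Qfin: "(\<integral>\<^sup>+\<phi>. ennreal (p \<phi>) * indicator \<Omega> \<phi> \<partial>lborel) < \<infinity>"
    and Qmeas: "(\<lambda>\<phi>. ennreal (p \<phi>) * indicator S \<phi>) \<in> borel_measurable lborel"
  shows "limsup (\<lambda>L. ereal (- (1 / real L) * ln (p_miss_avg NR Ns \<gamma> L \<Omega> p \<eta>)))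
           \<le> ereal (I_star NR Ns em \<gamma> xs + (b - a)/2)"
proof -
  define r where "r = real NR"
  define M where "M = real NR * real (Ns - 1)"
  define v where "v = (xs^2 - real NR^2) / (em * \<gamma>)"
  define \<beta>s where "\<beta>s = (xs - real NR) / 2"
  note IE = Istar_eq[OF NR Ns g em xs sol]
  have vpos: "v > 0" using IE(2) unfolding v_def .
  have bspos: "\<beta>s > 0" using IE(3) unfolding \<beta>s_def .
  have Mpos: "M > 0" using IE(4) unfolding M_def .
  have Ieq: "I_star NR Ns em \<gamma> xs = (\<beta>s * ln (2*\<beta>s/em) - \<beta>s + em/2) + Crate (\<gamma> * v) (r+\<beta>s) + Crate v M"
    using IE(5) unfolding v_def \<beta>s_def M_def r_def .
  have rpos: "r > 0" using NR by (simp add: r_def)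
  define \<beta> where "\<beta> = min \<beta>s (a/2)"
  have b0: "0 \<le> \<beta>" "\<beta> \<le> \<beta>s" using ab bspos by (auto simp: \<beta>_def)
  define x1 where "x1 = \<gamma> * v"
  have x1pos: "x1 > 0" using g vpos by (simp add: x1_def)
  define xc where "xc = min x1 (2*(r+\<beta>))"
  have xcpos: "xc > 0" using x1pos rpos b0 by (simp add: xc_def)
  have xcle: "xc \<le> x1" by (simp add: xc_def)
  define T where "T = - b/2 + (\<beta> * ln (a/(2*\<beta>)) + \<beta>) + (- Crate xc (r+\<beta>)) + (- Crate v M)"
  have Tb: "- T \<le> I_star NR Ns em \<gamma> xs + (b - a)/2"
  proof -
    have 1: "b/2 - \<beta> * ln (a/(2*\<beta>)) - \<beta> \<le> (\<beta>s * ln (2*\<beta>s/em) - \<beta>s + em/2) + (b-a)/2"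
      by (rule bracket_bound[OF ab(1,2,3) _ bspos \<beta>_def]) simp
    have 2: "Crate xc (r+\<beta>) \<le> Crate x1 (r+\<beta>s)"
      unfolding xc_def by (rule Crate_min[OF x1pos rpos b0])
    show ?thesis unfolding T_def Ieq using 1 2 by (simp add: x1_def)
  qed
  define j where "j L = nat \<lfloor>\<beta> * real L\<rfloor>" for L :: nat
  define X where "X L = xc * real L - 1" for L :: nat
  define Y where "Y L = v * real L" for L :: nat
  define LB where "LB L = pois_part L a b (j L) * chi_part (NR*L + j L) (X L) * chi_part (NR*L*(Ns-1)) (Y L)" for L
  define G where "G L = (- real L * b / 2 + PoisE L a (j L) + ChiE (NR*L + j L) (X L) + ChiE (NR*L*(Ns-1)) (Y L)) / real L" for L
  have aj: "0 < a \<or> j L = 0" for L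
  proof (cases "a = 0")
    case True
    then have "\<beta> = 0" using bspos by (simp add: \<beta>_def)
    then show ?thesis by (simp add: j_def)
  qed (use ab in auto)
  obtain N0 :: nat where N0: "real N0 > 1 / xc" using reals_Archimedean2 by blast
  have ev0: "eventually (\<lambda>L. 1 \<le> L \<and> 0 < X L) sequentially"
    using eventually_ge_at_top[of "N0 + 1"]
  proof eventually_elim
    case (elim L)
    then have "real L > 1 / xc" using N0 by linarith
    then have "xc * real L > 1" using xcpos by (simp add: field_simps)
    then show ?case using elim by (simp add: X_def)
  qed
  have pm: "LB L \<le> p_miss NR Ns \<gamma> L (\<eta> \<phi>)" if L: "1 \<le> L" "0 < X L" and phi: "\<phi> \<in> S" for L \<phi>
  proof -
    have "X L + 1 \<le> \<gamma> * Y L"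
    proof -
      have "xc * real L \<le> x1 * real L" using xcle by (intro mult_right_mono) auto
      then show ?thesis by (simp add: X_def Y_def x1_def mult.assoc)
    qed
    moreover have "0 < Y L" using vpos L by (simp add: Y_def)
    ultimately show ?thesis
      using p_miss_lower[OF NR Ns L(1) g ab(1) _ _ L(2), of "\<eta> \<phi>" b "Y L" "j L"] Sab phi
      unfolding LB_def pois_part_def chi_part_def by auto
  qed
  have lnLB: "0 < LB L \<and> real L * G L \<le> ln (LB L)" if L: "1 \<le> L" "0 < X L" for L
  proof -
    have YL: "0 < Y L" using vpos L by (simp add: Y_def)
    note P = pois_part_ln[OF L(1) ab(1) aj[of L], of b]
    note C1 = chi_part_ln[OF L(2), of "NR*L + j L"]
    note C2 = chi_part_ln[OF YL, of "NR*L*(Ns-1)"]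
    have pos: "0 < LB L" unfolding LB_def using P(1) C1(1) C2(1) by simp
    have "ln (LB L) = ln (pois_part L a b (j L)) + ln (chi_part (NR*L + j L) (X L)) + ln (chi_part (NR*L*(Ns-1)) (Y L))"
      unfolding LB_def using P(1) C1(1) C2(1) by (simp add: ln_mult_pos)
    moreover have "real L * G L = - real L * b / 2 + PoisE L a (j L) + ChiE (NR*L + j L) (X L) + ChiE (NR*L*(Ns-1)) (Y L)"
      using L by (simp add: G_def)
    ultimately show ?thesis using pos P(2) C1(2) C2(2) by linarith
  qed
  have evL1: "eventually (\<lambda>L::nat. 1 \<le> L) sequentially" by (rule eventually_ge_at_top)
  have limP: "(\<lambda>L. PoisE L a (j L) / real L) \<longlonglongrightarrow> \<beta> * ln (a/(2*\<beta>)) + \<beta>"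
  proof (cases "\<beta> = 0")
    case True
    then have "PoisE L a (j L) / real L = - (1 / real L)" for L by (simp add: PoisE_def j_def)
    moreover have "(\<lambda>L. - (1 / real L)) \<longlonglongrightarrow> 0" using tendsto_minus[OF inv_lim] by simp
    ultimately show ?thesis using True by simp
  next
    case False
    then have bp: "0 < \<beta>" using b0 by simp
    have apos: "0 < a" using bp ab bspos by (auto simp: \<beta>_def)
    show ?thesis using pois_piece[OF bp apos] unfolding PoisE_def j_def .
  qed
  have lim1: "(\<lambda>L. ChiE (NR*L + j L) (X L) / real L) \<longlonglongrightarrow> - Crate xc (r+\<beta>)"
  proof -
    have a1: "(\<lambda>L. real NR + real (j L) / real L) \<longlonglongrightarrow> r + \<beta>"
      unfolding r_def j_def by (intro tendsto_intros floor_lim b0)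
    have e1: "eventually (\<lambda>L. real NR + real (j L) / real L = real (NR*L + j L) / real L) sequentially"
      using evL1 by eventually_elim (simp add: field_simps)
    have n1: "(\<lambda>L. real (NR*L + j L) / real L) \<longlonglongrightarrow> r + \<beta>" by (rule Lim_transform_eventually[OF a1 e1])
    have a2: "(\<lambda>L. xc - 1 / real L) \<longlonglongrightarrow> xc - 0" by (intro tendsto_intros inv_lim)
    have e2: "eventually (\<lambda>L. xc - 1 / real L = X L / real L) sequentially"
      using evL1 by eventually_elim (simp add: X_def field_simps)
    have n2: "(\<lambda>L. X L / real L) \<longlonglongrightarrow> xc" using Lim_transform_eventually[OF a2 e2] by simp
    show ?thesis using chi_piece[OF n1 _ n2 xcpos] rpos b0 unfolding ChiE_def by simp
  qed
  have lim2: "(\<lambda>L. ChiE (NR*L*(Ns-1)) (Y L) / real L) \<longlonglongrightarrow> - Crate v M"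
  proof -
    have e1: "eventually (\<lambda>L. M = real (NR*L*(Ns-1)) / real L) sequentially"
      using evL1 by eventually_elim (simp add: M_def)
    have n1: "(\<lambda>L. real (NR*L*(Ns-1)) / real L) \<longlonglongrightarrow> M" by (rule Lim_transform_eventually[OF tendsto_const e1])
    have e2: "eventually (\<lambda>L. v = Y L / real L) sequentially"
      using evL1 by eventually_elim (simp add: Y_def)
    have n2: "(\<lambda>L. Y L / real L) \<longlonglongrightarrow> v" by (rule Lim_transform_eventually[OF tendsto_const e2])
    show ?thesis using chi_piece[OF n1 Mpos n2 vpos] unfolding ChiE_def by simp
  qed
  have limG: "G \<longlonglongrightarrow> T"
  proof -
    have "(\<lambda>L. - b/2 + PoisE L a (j L) / real L + ChiE (NR*L + j L) (X L) / real L + ChiE (NR*L*(Ns-1)) (Y L) / real L)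
        \<longlonglongrightarrow> - b/2 + (\<beta> * ln (a/(2*\<beta>)) + \<beta>) + (- Crate xc (r+\<beta>)) + (- Crate v M)"
      by (intro tendsto_intros limP lim1 lim2)
    moreover have "eventually (\<lambda>L. - b/2 + PoisE L a (j L) / real L + ChiE (NR*L + j L) (X L) / real L + ChiE (NR*L*(Ns-1)) (Y L) / real L = G L) sequentially"
      using evL1 by eventually_elim (simp add: G_def add_divide_distrib diff_divide_distrib)
    ultimately show ?thesis unfolding T_def by (rule Lim_transform_eventually)
  qed
  define Q where "Q = (\<integral>\<^sup>+\<phi>. ennreal (p \<phi>) * indicator S \<phi> \<partial>lborel)"
  have Qle: "Q \<le> (\<integral>\<^sup>+\<phi>. ennreal (p \<phi>) * indicator \<Omega> \<phi> \<partial>lborel)"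
    unfolding Q_def using SO by (intro nn_integral_mono) (auto split: split_indicator)
  define Qr where "Qr = enn2real Q"
  have Qrpos: "0 < Qr" unfolding Qr_def enn2real_positive_iff using Qpos Qle Qfin by (auto simp: Q_def)
  have avg: "LB L * Qr \<le> p_miss_avg NR Ns \<gamma> L \<Omega> p \<eta>" if L: "1 \<le> L" "0 < X L" for L
  proof -
    define I where "I = (\<integral>\<^sup>+\<phi>. ennreal (p_miss NR Ns \<gamma> L (\<eta> \<phi>) * p \<phi>) * indicator \<Omega> \<phi> \<partial>lborel)"
    have LBnn: "0 \<le> LB L" using lnLB[OF L] by simp
    have "ennreal (LB L) * Q = (\<integral>\<^sup>+\<phi>. ennreal (LB L) * (ennreal (p \<phi>) * indicator S \<phi>) \<partial>lborel)"
      unfolding Q_def by (rule nn_integral_cmult[OF Qmeas, symmetric])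
    also have "\<dots> \<le> I"
      unfolding I_def
    proof (rule nn_integral_mono)
      fix \<phi> :: real
      show "ennreal (LB L) * (ennreal (p \<phi>) * indicator S \<phi>) \<le> ennreal (p_miss NR Ns \<gamma> L (\<eta> \<phi>) * p \<phi>) * indicator \<Omega> \<phi>"
      proof (cases "\<phi> \<in> S")
        case True
        then have O: "\<phi> \<in> \<Omega>" using SO by auto
        have pp: "0 \<le> p \<phi>" using p_nonneg O by simp
        have "LB L * p \<phi> \<le> p_miss NR Ns \<gamma> L (\<eta> \<phi>) * p \<phi>"
          using pm[OF L True] pp by (rule mult_right_mono)
        then have "ennreal (LB L * p \<phi>) \<le> ennreal (p_miss NR Ns \<gamma> L (\<eta> \<phi>) * p \<phi>)" by (rule ennreal_leI)
        then show ?thesis using True O LBnn pp by (simp add: ennreal_mult)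
      qed simp
    qed
    finally have h1: "ennreal (LB L) * Q \<le> I" .
    have "I \<le> (\<integral>\<^sup>+\<phi>. ennreal (p \<phi>) * indicator \<Omega> \<phi> \<partial>lborel)"
      unfolding I_def
    proof (rule nn_integral_mono)
      fix \<phi> :: real
      show "ennreal (p_miss NR Ns \<gamma> L (\<eta> \<phi>) * p \<phi>) * indicator \<Omega> \<phi> \<le> ennreal (p \<phi>) * indicator \<Omega> \<phi>"
      proof (cases "\<phi> \<in> \<Omega>")
        case True
        have pp: "0 \<le> p \<phi>" using p_nonneg True by simp
        have "p_miss NR Ns \<gamma> L (\<eta> \<phi>) \<le> 1" using p_miss_bounds(2)[OF NR Ns L(1)] eta_nonneg True by simp
        then have "p_miss NR Ns \<gamma> L (\<eta> \<phi>) * p \<phi> \<le> 1 * p \<phi>" using pp by (rule mult_right_mono)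
        then show ?thesis using True by (simp add: ennreal_leI)
      qed simp
    qed
    then have Ifin: "I < \<infinity>" using Qfin by simp
    have "LB L * Qr = enn2real (ennreal (LB L) * Q)" unfolding Qr_def enn2real_mult using LBnn by simp
    also have "\<dots> \<le> enn2real I" using h1 Ifin by (intro enn2real_mono) auto
    also have "\<dots> = p_miss_avg NR Ns \<gamma> L \<Omega> p \<eta>" unfolding I_def p_miss_avg_def ..
    finally show ?thesis .
  qed
  define h where "h L = - G L - ln Qr * (1 / real L)" for L
  have limh: "h \<longlonglongrightarrow> - T - ln Qr * 0" unfolding h_def by (intro tendsto_intros limG inv_lim)
  have evf: "eventually (\<lambda>L. ereal (- (1 / real L) * ln (p_miss_avg NR Ns \<gamma> L \<Omega> p \<eta>)) \<le> ereal (h L)) sequentially"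
    using ev0
  proof eventually_elim
    case (elim L)
    then have L: "1 \<le> L" "0 < X L" by auto
    have lb: "0 < LB L" "real L * G L \<le> ln (LB L)" using lnLB[OF L] by auto
    have pos: "0 < LB L * Qr" using lb Qrpos by simp
    have "ln (LB L * Qr) \<le> ln (p_miss_avg NR Ns \<gamma> L \<Omega> p \<eta>)"
      using avg[OF L] pos by simp
    moreover have "ln (LB L * Qr) = ln (LB L) + ln Qr" using lb Qrpos by (simp add: ln_mult_pos)
    ultimately have "real L * G L + ln Qr \<le> ln (p_miss_avg NR Ns \<gamma> L \<Omega> p \<eta>)" using lb by linarith
    then have "(real L * G L + ln Qr) / real L \<le> ln (p_miss_avg NR Ns \<gamma> L \<Omega> p \<eta>) / real L"
      by (rule divide_right_mono) auto
    moreover have "(real L * G L + ln Qr) / real L = G L + ln Qr * (1 / real L)" using L by (simp add: field_simps)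
    moreover have "- (1 / real L) * ln (p_miss_avg NR Ns \<gamma> L \<Omega> p \<eta>) = - (ln (p_miss_avg NR Ns \<gamma> L \<Omega> p \<eta>) / real L)"
      by simp
    ultimately have "- (1 / real L) * ln (p_miss_avg NR Ns \<gamma> L \<Omega> p \<eta>) \<le> h L"
      unfolding h_def by linarith
    then show ?case by simp
  qed
  have "limsup (\<lambda>L. ereal (- (1 / real L) * ln (p_miss_avg NR Ns \<gamma> L \<Omega> p \<eta>))) \<le> limsup (\<lambda>L. ereal (h L))"
    by (rule Limsup_mono[OF evf])
  also have "limsup (\<lambda>L. ereal (h L)) = ereal (- T)"
    using limh by (intro lim_imp_Limsup) auto
  also have "\<dots> \<le> ereal (I_star NR Ns em \<gamma> xs + (b - a)/2)" using Tb by simp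
  finally show ?thesis .
qed



lemma cover_cell:
  fixes em t :: real and N :: nat
  assumes "0 < em" "0 < t" "t \<le> em" "1 \<le> N"
  shows "\<exists>i<N. real i * em / real N \<le> t \<and> t \<le> real (Suc i) * em / real N"
proof -
  define s where "s = t * real N / em"
  have s0: "0 < s" using assms by (simp add: s_def)
  have sN: "s \<le> real N" using assms by (simp add: s_def field_simps)
  define k where "k = \<lceil>s\<rceil>"
  have k1: "1 \<le> k" using s0 by (simp add: k_def)
  have kN: "k \<le> int N" using sN by (simp add: k_def ceiling_le_iff)
  have ks: "s \<le> k" "k < s + 1" by (auto simp: k_def ceiling_correct) linarith
  define i where "i = nat (k - 1)"
  have ik: "real i = real_of_int k - 1" using k1 by (simp add: i_def)
  have "i < N" using k1 kN by (simp add: i_def)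
  moreover have "real i * em / real N \<le> t"
  proof -
    have "real i \<le> s" using ik ks by simp
    then have "real i * em \<le> s * em" using assms by (intro mult_right_mono) auto
    then show ?thesis using assms by (simp add: s_def field_simps)
  qed
  moreover have "t \<le> real (Suc i) * em / real N"
  proof -
    have "s \<le> real (Suc i)" using ik ks by simp
    then have "s * em \<le> real (Suc i) * em" using assms by (intro mult_right_mono) auto
    then show ?thesis using assms by (simp add: s_def field_simps)
  qed
  ultimately show ?thesis by blast
qed

theorem proposition4:
  fixes NR Ns :: nat and \<gamma> :: real and \<Omega> \<Omega>m :: "real set"
    and p \<eta> :: "real \<Rightarrow> real" and \<eta>m xs :: real
  assumes NR: "NR \<ge> 1" and Ns: "Ns \<ge> 2" and gamma: "\<gamma> > 0"
    and Omega: "is_interval \<Omega>"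
    and p_meas: "set_borel_measurable lborel \<Omega> p"
    and p_nonneg: "\<forall>\<phi>\<in>\<Omega>. p \<phi> \<ge> 0"
    and p_int: "set_integrable lborel \<Omega> p"
    and p_one: "(LINT \<phi>:\<Omega>|lborel. p \<phi>) = 1"
    and eta_meas: "set_borel_measurable lborel \<Omega> \<eta>"
    and eta_pos: "\<forall>\<phi>\<in>\<Omega>. \<eta> \<phi> > 0"
    and Om_sub: "\<Omega>m \<subseteq> \<Omega>" and Om_meas: "\<Omega>m \<in> sets lborel"
    and etam_pos: "\<eta>m > 0"
    and eta_le: "\<forall>\<phi>\<in>\<Omega>m. \<eta> \<phi> \<le> \<eta>m"
    and Om_prob: "(LINT \<phi>:\<Omega>m|lborel. p \<phi>) > 0"
    and xs_pos: "xs > 0"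
    and xs_sol: "(\<gamma> + 1) / (\<eta>m * \<gamma>) * (xs^2 - real NR ^ 2) - xs - real NR
                   - 2 * real NR * real (Ns - 1) = 0"
    and gamma_small: "\<gamma> < (2 * real NR + \<eta>m) / (2 * real NR * real (Ns - 1))"
  shows "limsup (\<lambda>L. ereal (- (1 / real L) * ln (p_miss_avg NR Ns \<gamma> L \<Omega> p \<eta>)))
           \<le> ereal (I_star NR Ns \<eta>m \<gamma> xs)"
proof -
  let ?lhs = "limsup (\<lambda>L. ereal (- (1 / real L) * ln (p_miss_avg NR Ns \<gamma> L \<Omega> p \<eta>)))"
  have pm: "(\<lambda>x. indicator \<Omega> x *\<^sub>R p x) \<in> borel_measurable lborel"
    using p_meas unfolding set_borel_measurable_def .
  have em: "(\<lambda>x. indicator \<Omega> x *\<^sub>R \<eta> x) \<in> borel_measurable lborel"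
    using eta_meas unfolding set_borel_measurable_def .
  have pind: "ennreal (p x) * indicator A x = ennreal (indicator \<Omega> x *\<^sub>R p x) * indicator A x" if "A \<subseteq> \<Omega>" for A x
    using that by (auto split: split_indicator)
  have Qfin: "(\<integral>\<^sup>+\<phi>. ennreal (p \<phi>) * indicator \<Omega> \<phi> \<partial>lborel) < \<infinity>"
  proof -
    have "(\<integral>\<^sup>+\<phi>. ennreal (indicator \<Omega> \<phi> *\<^sub>R p \<phi>) \<partial>lborel) \<noteq> \<infinity>"
      using p_int unfolding set_integrable_def by (rule integrableD(2))
    moreover have "(\<integral>\<^sup>+\<phi>. ennreal (p \<phi>) * indicator \<Omega> \<phi> \<partial>lborel) = (\<integral>\<^sup>+\<phi>. ennreal (indicator \<Omega> \<phi> *\<^sub>R p \<phi>) \<partial>lborel)"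
      by (intro nn_integral_cong) (auto split: split_indicator)
    ultimately show ?thesis by (simp add: less_top)
  qed
  have Qm_pos: "0 < (\<integral>\<^sup>+\<phi>. ennreal (p \<phi>) * indicator \<Omega>m \<phi> \<partial>lborel)"
  proof -
    have si: "set_integrable lborel \<Omega>m p" by (rule set_integrable_subset[OF p_int Om_meas Om_sub])
    have "(\<integral>\<^sup>+\<phi>. ennreal (indicator \<Omega>m \<phi> *\<^sub>R p \<phi>) \<partial>lborel) = ennreal (LINT \<phi>:\<Omega>m|lborel. p \<phi>)"
      unfolding set_lebesgue_integral_def
      by (rule nn_integral_eq_integral) (use si p_nonneg Om_sub in \<open>auto simp: set_integrable_def split: split_indicator\<close>)
    moreover have "(\<integral>\<^sup>+\<phi>. ennreal (p \<phi>) * indicator \<Omega>m \<phi> \<partial>lborel) = (\<integral>\<^sup>+\<phi>. ennreal (indicator \<Omega>m \<phi> *\<^sub>R p \<phi>) \<partial>lborel)"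
      by (intro nn_integral_cong) (auto split: split_indicator)
    ultimately show ?thesis using Om_prob by simp
  qed
  have main: "?lhs \<le> ereal (I_star NR Ns \<eta>m \<gamma> xs + \<eta>m / (2 * real N))" if N: "1 \<le> N" for N :: nat
  proof -
    define a where "a i = real i * \<eta>m / real N" for i :: nat
    define b where "b i = real (Suc i) * \<eta>m / real N" for i :: nat
    define S where "S i = \<Omega>m \<inter> {\<phi>. a i \<le> \<eta> \<phi> \<and> \<eta> \<phi> \<le> b i}" for i
    have SO: "S i \<subseteq> \<Omega>" for i using Om_sub by (auto simp: S_def)
    have Sm: "S i \<in> sets lborel" for i
    proof -
      have "(\<lambda>x. indicator \<Omega> x *\<^sub>R \<eta> x) -` {a i..b i} \<inter> space lborel \<in> sets lborel"
        by (rule measurable_sets[OF em]) simp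
      then have "\<Omega>m \<inter> ((\<lambda>x. indicator \<Omega> x *\<^sub>R \<eta> x) -` {a i..b i} \<inter> space lborel) \<in> sets lborel"
        using Om_meas by auto
      moreover have "\<Omega>m \<inter> ((\<lambda>x. indicator \<Omega> x *\<^sub>R \<eta> x) -` {a i..b i} \<inter> space lborel) = S i"
        using Om_sub by (auto simp: S_def)
      ultimately show ?thesis by simp
    qed
    have Smeas: "(\<lambda>\<phi>. ennreal (p \<phi>) * indicator (S i) \<phi>) \<in> borel_measurable lborel" for i
    proof -
      have "(\<lambda>\<phi>. ennreal (indicator \<Omega> \<phi> *\<^sub>R p \<phi>) * indicator (S i) \<phi>) \<in> borel_measurable lborel"
        using pm Sm[of i] by measurable
      moreover have "(\<lambda>\<phi>. ennreal (p \<phi>) * indicator (S i) \<phi>) = (\<lambda>\<phi>. ennreal (indicator \<Omega> \<phi> *\<^sub>R p \<phi>) * indicator (S i) \<phi>)"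
        using pind[OF SO[of i]] by auto
      ultimately show ?thesis by simp
    qed
    have "\<exists>i<N. 0 < (\<integral>\<^sup>+\<phi>. ennreal (p \<phi>) * indicator (S i) \<phi> \<partial>lborel)"
    proof (rule ccontr)
      assume "\<not> ?thesis"
      then have z: "\<forall>i<N. (\<integral>\<^sup>+\<phi>. ennreal (p \<phi>) * indicator (S i) \<phi> \<partial>lborel) = 0" by auto
      have "(\<integral>\<^sup>+\<phi>. ennreal (p \<phi>) * indicator \<Omega>m \<phi> \<partial>lborel) \<le> (\<integral>\<^sup>+\<phi>. (\<Sum>i\<in>{..<N}. ennreal (p \<phi>) * indicator (S i) \<phi>) \<partial>lborel)"
      proof (rule nn_integral_mono)
        fix \<phi> :: real
        show "ennreal (p \<phi>) * indicator \<Omega>m \<phi> \<le> (\<Sum>i\<in>{..<N}. ennreal (p \<phi>) * indicator (S i) \<phi>)"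
        proof (cases "\<phi> \<in> \<Omega>m")
          case True
          have "0 < \<eta> \<phi>" "\<eta> \<phi> \<le> \<eta>m" using True eta_pos eta_le Om_sub by auto
          then obtain i where i: "i < N" "a i \<le> \<eta> \<phi>" "\<eta> \<phi> \<le> b i"
            using cover_cell[OF etam_pos _ _ N] unfolding a_def b_def by blast
          then have "\<phi> \<in> S i" using True by (simp add: S_def)
          then have "ennreal (p \<phi>) * indicator \<Omega>m \<phi> = ennreal (p \<phi>) * indicator (S i) \<phi>" using True by simp
          also have "\<dots> \<le> (\<Sum>i\<in>{..<N}. ennreal (p \<phi>) * indicator (S i) \<phi>)"
            using i(1) by (intro member_le_sum) auto
          finally show ?thesis .
        qed simp
      qed
      also have "\<dots> = (\<Sum>i\<in>{..<N}. \<integral>\<^sup>+\<phi>. ennreal (p \<phi>) * indicator (S i) \<phi> \<partial>lborel)"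
        by (rule nn_integral_sum) (rule Smeas)
      also have "\<dots> = 0" using z by simp
      finally show False using Qm_pos by simp
    qed
    then obtain i where i: "i < N" "0 < (\<integral>\<^sup>+\<phi>. ennreal (p \<phi>) * indicator (S i) \<phi> \<partial>lborel)" by blast
    have ab: "0 \<le> a i" "a i < b i" "b i \<le> \<eta>m"
      using etam_pos N i(1) by (auto simp: a_def b_def divide_le_eq intro!: divide_strict_right_mono)
    have Sab: "\<forall>\<phi>\<in>S i. a i \<le> \<eta> \<phi> \<and> \<eta> \<phi> \<le> b i" by (auto simp: S_def)
    have eta_nn: "\<forall>\<phi>\<in>\<Omega>. \<eta> \<phi> \<ge> 0" using eta_pos by auto
    have "?lhs \<le> ereal (I_star NR Ns \<eta>m \<gamma> xs + (b i - a i)/2)"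
      by (rule cell_bound[OF NR Ns gamma etam_pos xs_pos xs_sol ab SO Sab p_nonneg eta_nn i(2) Qfin Smeas])
    moreover have "(b i - a i)/2 = \<eta>m / (2 * real N)" using N by (simp add: a_def b_def field_simps)
    ultimately show ?thesis by simp
  qed
  show ?thesis
  proof (rule ereal_le_epsilon2)
    fix e :: real assume e: "0 < e"
    obtain N :: nat where N: "real N > \<eta>m / (2 * e)" using reals_Archimedean2 by blast
    have N1: "1 \<le> N"
    proof -
      have "0 < \<eta>m / (2*e)" using etam_pos e by simp
      then show ?thesis using N by (cases N) auto
    qed
    have "\<eta>m / (2 * real N) \<le> e"
    proof -
      have "\<eta>m / (2 * e) < real N" by (rule N)
      then have "\<eta>m < real N * (2 * e)" using e by (simp add: divide_less_eq)
      then show ?thesis using N1 e by (simp add: divide_le_eq algebra_simps)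
    qed
    then have "ereal (I_star NR Ns \<eta>m \<gamma> xs + \<eta>m / (2 * real N)) \<le> ereal (I_star NR Ns \<eta>m \<gamma> xs) + ereal e"
      by simp
    then show "?lhs \<le> ereal (I_star NR Ns \<eta>m \<gamma> xs) + ereal e" using main[OF N1] by (rule order_trans[rotated])
  qed
qed


end
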